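(* Let $G$ be a group, $\mathbb{F}$ a field, and $\alpha,\beta$ non-zero elements of $\mathbb{F}[G]$ with $|supp(\alpha)|=n$ and $\alpha\beta=0$. Then every vertex of $Z(\alpha,\beta)$ has degree in $\{n,n+1,\dots,n(n-1)\}$. Moreover, if $\mathbb{F}=\mathbb{F}_2$, then the degrees of all vertices of $Z(\alpha,\beta)$ are even when $n$ is even and odd when $n$ is odd.
   Context: $supp(\gamma)=\{x\in G:\gamma_x\ne0\}$. The zero-divisor graph $Z(\alpha,\beta)$ (for $\alpha\beta=0$) is the multigraph with vertex set $supp(\beta)$ whose edges are the sets $\{(h,h',g,g'),(h',h,g',g)\}$ with $h,h'\in supp(\alpha)$, $g,g'\in supp(\beta)$, $g\ne g'$, $hg=h'g'$; such an edge joins $g$ and $g'$. The degree of a vertex is the number of edges incident to it. *)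

theory Defs
  imports "HOL-Algebra.Group"
begin

text \<open>Elements of the group algebra F[G] are functions from the carrier of G to the
field F with finite support contained in the carrier.\<close>

definition supp :: "('g \<Rightarrow> 'f::zero) \<Rightarrow> 'g set" where
  "supp \<gamma> = {x. \<gamma> x \<noteq> 0}"

definition group_ring_elem :: "('g, 'b) monoid_scheme \<Rightarrow> ('g \<Rightarrow> 'f::zero) \<Rightarrow> bool" where
  "group_ring_elem G \<gamma> \<longleftrightarrow> supp \<gamma> \<subseteq> carrier G \<and> finite (supp \<gamma>)"

definition gr_mult :: "('g, 'b) monoid_scheme \<Rightarrow> ('g \<Rightarrow> 'f::comm_ring_1) \<Rightarrow> ('g \<Rightarrow> 'f) \<Rightarrow> 'g \<Rightarrow> 'f" where
  "gr_mult G \<alpha> \<beta> x =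
     (\<Sum>p\<in>{(h, g). h \<in> supp \<alpha> \<and> g \<in> supp \<beta> \<and> h \<otimes>\<^bsub>G\<^esub> g = x}. \<alpha> (fst p) * \<beta> (snd p))"

definition zd_edges :: "('g, 'b) monoid_scheme \<Rightarrow> ('g \<Rightarrow> 'f::zero) \<Rightarrow> ('g \<Rightarrow> 'f)
    \<Rightarrow> ('g \<times> 'g \<times> 'g \<times> 'g) set set" where
  "zd_edges G \<alpha> \<beta> = {{(h, h', g, g'), (h', h, g', g)} | h h' g g'.
      h \<in> supp \<alpha> \<and> h' \<in> supp \<alpha> \<and> g \<in> supp \<beta> \<and> g' \<in> supp \<beta> \<and> g \<noteq> g' \<and>
      h \<otimes>\<^bsub>G\<^esub> g = h' \<otimes>\<^bsub>G\<^esub> g'}"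

text \<open>The edge {(h,h',g,g'),(h',h,g',g)} joins g and g'.\<close>
definition zd_incident :: "'g \<Rightarrow> ('g \<times> 'g \<times> 'g \<times> 'g) set \<Rightarrow> bool" where
  "zd_incident v e \<longleftrightarrow> (\<exists>h h' g'. (h, h', v, g') \<in> e)"

definition zd_degree :: "('g, 'b) monoid_scheme \<Rightarrow> ('g \<Rightarrow> 'f::zero) \<Rightarrow> ('g \<Rightarrow> 'f) \<Rightarrow> 'g \<Rightarrow> nat" where
  "zd_degree G \<alpha> \<beta> v = card {e \<in> zd_edges G \<alpha> \<beta>. zd_incident v e}"

end

theory Submission
  imports Defs
begin

lemma sum_odd_parity:
  assumes "finite A" "\<forall>x\<in>A. odd (f x :: nat)"
  shows "even (sum f A) \<longleftrightarrow> even (card A)"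
  using assms by (induction A rule: finite_induct) auto

lemma of_nat_two_elem:
  assumes "(1::'f::field) + 1 = 0"
  shows "(of_nat k :: 'f) = (if even k then 0 else 1)"
proof (induction k)
  case 0 then show ?case by simp
next
  case (Suc k) then show ?case using assms by (auto simp: add.commute)
qed

lemma two_elem_field:
  assumes "card (UNIV :: 'f::field set) = 2"
  shows "(1::'f) + 1 = 0" and "\<And>x::'f. x \<noteq> 0 \<Longrightarrow> x = 1"
proof -
  have fin: "finite (UNIV :: 'f set)" using assms card.infinite by fastforce
  have sub: "{0, 1} \<subseteq> (UNIV :: 'f set)" by simp
  have "card {0::'f, 1} = 2" by simp
  hence U: "(UNIV :: 'f set) = {0, 1}"
    using card_subset_eq[OF fin sub] assms by simp
  show "\<And>x::'f. x \<noteq> 0 \<Longrightarrow> x = 1" using U by auto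
  show "(1::'f) + 1 = 0"
  proof (rule ccontr)
    assume "(1::'f) + 1 \<noteq> 0"
    hence "(1::'f) + 1 = 1" using U by auto
    hence "(1::'f) = 0" by (metis add_cancel_right_right)
    thus False by simp
  qed
qed

theorem mainTheorem8:
  fixes G :: "('g, 'b) monoid_scheme"
    and \<alpha> \<beta> :: "'g \<Rightarrow> 'f::field"
    and n :: nat
  assumes "group G"
    and "group_ring_elem G \<alpha>" and "group_ring_elem G \<beta>"
    and "\<alpha> \<noteq> (\<lambda>_. 0)" and "\<beta> \<noteq> (\<lambda>_. 0)"
    and "card (supp \<alpha>) = n"
    and "\<forall>x \<in> carrier G. gr_mult G \<alpha> \<beta> x = 0"
  shows "(\<forall>v \<in> supp \<beta>. zd_degree G \<alpha> \<beta> v \<in> {n..n * (n - 1)})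
       \<and> (card (UNIV :: 'f set) = 2 \<longrightarrow> (\<forall>v \<in> supp \<beta>. (even (zd_degree G \<alpha> \<beta> v) \<longleftrightarrow> even n)))"
proof -
  interpret group G by fact
  define A where "A = supp \<alpha>"
  define B where "B = supp \<beta>"
  have AC: "A \<subseteq> carrier G" and fA: "finite A"
    using assms(2) unfolding group_ring_elem_def A_def by auto
  have BC: "B \<subseteq> carrier G" and fB: "finite B"
    using assms(3) unfolding group_ring_elem_def B_def by auto
  have cA: "card A = n" using assms(6) A_def by simp
  define S where "S v h = {(h', g'). h' \<in> A \<and> g' \<in> B \<and> g' \<noteq> v \<and> h' \<otimes>\<^bsub>G\<^esub> g' = h \<otimes>\<^bsub>G\<^esub> v}" for v h
  define P where "P v h = {(h', g'). h' \<in> A \<and> g' \<in> B \<and> h' \<otimes>\<^bsub>G\<^esub> g' = h \<otimes>\<^bsub>G\<^esub> v}" for v h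
  have finS: "finite (S v h)" for v h
    by (rule finite_subset[of _ "A \<times> B"]) (use fA fB in \<open>auto simp: S_def\<close>)
  have deg: "zd_degree G \<alpha> \<beta> v = (\<Sum>h\<in>A. card (S v h))" if v: "v \<in> B" for v
  proof -
    define T where "T = {(h, h', g'). h \<in> A \<and> h' \<in> A \<and> g' \<in> B \<and> g' \<noteq> v \<and> h \<otimes>\<^bsub>G\<^esub> v = h' \<otimes>\<^bsub>G\<^esub> g'}"
    define f :: "'g \<times> 'g \<times> 'g \<Rightarrow> _" where "f = (\<lambda>(h, h', g'). {(h, h', v, g'), (h', h, g', v)})"
    have inj: "inj_on f T"
    proof (rule inj_onI)
      fix x y assume x: "x \<in> T" and y: "y \<in> T" and fxy: "f x = f y"
      obtain a b c where xa: "x = (a, b, c)" by (cases x) auto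
      obtain a' b' c' where ya: "y = (a', b', c')" by (cases y) auto
      have "c' \<noteq> v" using y unfolding ya T_def by simp
      have fx: "f x = {(a, b, v, c), (b, a, c, v)}" unfolding xa f_def by simp
      have fy: "f y = {(a', b', v, c'), (b', a', c', v)}" unfolding ya f_def by simp
      have "(a, b, v, c) \<in> f y" using fxy fx by (metis insertI1)
      hence "(a, b, v, c) = (a', b', v, c')" using fy \<open>c' \<noteq> v\<close> by simp
      thus "x = y" using xa ya by simp
    qed
    have img: "f ` T = {e \<in> zd_edges G \<alpha> \<beta>. zd_incident v e}"
    proof
      show "f ` T \<subseteq> {e \<in> zd_edges G \<alpha> \<beta>. zd_incident v e}"
      proof
        fix e assume "e \<in> f ` T"
        then obtain a b c where t: "(a, b, c) \<in> T" and e: "e = f (a, b, c)" by auto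
        have c: "a \<in> supp \<alpha>" "b \<in> supp \<alpha>" "c \<in> supp \<beta>" "v \<in> supp \<beta>" "v \<noteq> c"
           "a \<otimes>\<^bsub>G\<^esub> v = b \<otimes>\<^bsub>G\<^esub> c"
          using t v unfolding T_def A_def B_def by auto
        have e2: "e = {(a, b, v, c), (b, a, c, v)}" using e f_def by simp
        have "e \<in> zd_edges G \<alpha> \<beta>"
          unfolding zd_edges_def
          by (rule CollectI, rule exI[of _ a], rule exI[of _ b], rule exI[of _ v],
              rule exI[of _ c]) (use c e2 in simp)
        moreover have "zd_incident v e" unfolding zd_incident_def e2 by blast
        ultimately show "e \<in> {e \<in> zd_edges G \<alpha> \<beta>. zd_incident v e}" by simp
      qed
    next
      show "{e \<in> zd_edges G \<alpha> \<beta>. zd_incident v e} \<subseteq> f ` T"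
      proof
        fix e assume "e \<in> {e \<in> zd_edges G \<alpha> \<beta>. zd_incident v e}"
        then obtain h h' g g' a b c where
          e: "e = {(h, h', g, g'), (h', h, g', g)}" and
          c: "h \<in> A" "h' \<in> A" "g \<in> B" "g' \<in> B" "g \<noteq> g'" "h \<otimes>\<^bsub>G\<^esub> g = h' \<otimes>\<^bsub>G\<^esub> g'"
          and abc: "(a, b, v, c) \<in> e"
          unfolding zd_edges_def zd_incident_def A_def B_def by blast
        show "e \<in> f ` T"
        proof (cases "g = v")
          case True
          then have "(h, h', g') \<in> T" using c unfolding T_def by auto
          moreover have "e = f (h, h', g')" using e True f_def by simp
          ultimately show ?thesis by blast
        next
          case False
          then have "g' = v" using abc e by auto
          then have "(h', h, g) \<in> T" using c unfolding T_def by auto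
          moreover have "e = f (h', h, g)" using e \<open>g' = v\<close> f_def by auto
          ultimately show ?thesis by blast
        qed
      qed
    qed
    have "zd_degree G \<alpha> \<beta> v = card T"
      unfolding zd_degree_def using card_image[OF inj] img by simp
    also have "T = (SIGMA h:A. S v h)"
      unfolding T_def S_def by auto
    also have "card \<dots> = (\<Sum>h\<in>A. card (S v h))"
      by (rule card_SigmaI[OF fA]) (simp add: finS)
    finally show ?thesis .
  qed
  have PS: "P v h = insert (h, v) (S v h)" "(h, v) \<notin> S v h"
    if "h \<in> A" "v \<in> B" for v h
  proof -
    have "a = h" if "a \<in> A" "a \<otimes>\<^bsub>G\<^esub> v = h \<otimes>\<^bsub>G\<^esub> v" for a
      using that \<open>h \<in> A\<close> \<open>v \<in> B\<close> AC BC by (auto simp: subset_iff)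
    thus "P v h = insert (h, v) (S v h)" "(h, v) \<notin> S v h"
      using that unfolding P_def S_def by auto
  qed
  have cardP: "card (P v h) = Suc (card (S v h))" if "h \<in> A" "v \<in> B" for v h
    using PS[OF that] finS by simp
  have sumP: "(\<Sum>p\<in>P v h. \<alpha> (fst p) * \<beta> (snd p)) = 0" if "h \<in> A" "v \<in> B" for v h
  proof -
    have "h \<otimes>\<^bsub>G\<^esub> v \<in> carrier G" using that AC BC by auto
    hence "gr_mult G \<alpha> \<beta> (h \<otimes>\<^bsub>G\<^esub> v) = 0" using assms(7) by blast
    thus ?thesis unfolding gr_mult_def P_def A_def B_def by simp
  qed
  have Sne: "S v h \<noteq> {}" if "h \<in> A" "v \<in> B" for v h
  proof
    assume "S v h = {}"
    hence "P v h = {(h, v)}" using PS[OF that] by simp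
    hence "\<alpha> h * \<beta> v = 0" using sumP[OF that] by simp
    thus False using that A_def B_def supp_def by (simp add: supp_def)
  qed
  have Sle: "card (S v h) \<le> n - 1" if "h \<in> A" "v \<in> B" for v h
  proof -
    have "inj_on fst (S v h)"
    proof (rule inj_onI)
      fix x y assume "x \<in> S v h" "y \<in> S v h" "fst x = fst y"
      then obtain a g1 g2 where "x = (a, g1)" "y = (a, g2)" "a \<in> A" "g1 \<in> B" "g2 \<in> B"
          "a \<otimes>\<^bsub>G\<^esub> g1 = a \<otimes>\<^bsub>G\<^esub> g2"
        unfolding S_def by auto
      moreover have "g1 = g2" using calculation AC BC by (auto simp: subset_iff)
      ultimately show "x = y" by simp
    qed
    moreover have "fst ` S v h \<subseteq> A - {h}"
    proof
      fix x assume "x \<in> fst ` S v h"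
      then obtain g' where "(x, g') \<in> S v h" by auto
      hence "x \<in> A" "g' \<in> B" "g' \<noteq> v" "x \<otimes>\<^bsub>G\<^esub> g' = h \<otimes>\<^bsub>G\<^esub> v" unfolding S_def by auto
      moreover have "x \<noteq> h"
      proof
        assume "x = h"
        hence "h \<otimes>\<^bsub>G\<^esub> g' = h \<otimes>\<^bsub>G\<^esub> v" using calculation by simp
        hence "g' = v" using calculation AC BC that by (auto simp: subset_iff)
        thus False using calculation by simp
      qed
      ultimately show "x \<in> A - {h}" by simp
    qed
    ultimately have "card (S v h) \<le> card (A - {h})"
      using card_inj_on_le fA by blast
    thus ?thesis using cA that fA by simp
  qed
  have part1: "\<forall>v \<in> supp \<beta>. zd_degree G \<alpha> \<beta> v \<in> {n..n * (n - 1)}"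
  proof
    fix v assume "v \<in> supp \<beta>"
    hence v: "v \<in> B" using B_def by simp
    have "(\<Sum>h\<in>A. card (S v h)) \<le> (\<Sum>h\<in>A. n - 1)"
      by (rule sum_mono) (use Sle v in auto)
    hence up: "(\<Sum>h\<in>A. card (S v h)) \<le> n * (n - 1)" using cA by simp
    have "(\<Sum>h\<in>A. 1) \<le> (\<Sum>h\<in>A. card (S v h))"
      by (rule sum_mono) (use Sne v finS in \<open>auto simp: Suc_le_eq card_gt_0_iff\<close>)
    hence lo: "n \<le> (\<Sum>h\<in>A. card (S v h))" using cA by simp
    show "zd_degree G \<alpha> \<beta> v \<in> {n..n * (n - 1)}" using up lo deg[OF v] by simp
  qed
  have part2: "card (UNIV :: 'f set) = 2 \<longrightarrow> (\<forall>v \<in> supp \<beta>. (even (zd_degree G \<alpha> \<beta> v) \<longleftrightarrow> even n))"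
  proof (intro impI ballI)
    assume c2: "card (UNIV :: 'f set) = 2"
    note tw = two_elem_field[OF c2]
    fix v assume "v \<in> supp \<beta>"
    hence v: "v \<in> B" using B_def by simp
    have odd: "odd (card (S v h))" if h: "h \<in> A" for h
    proof -
      have "(\<Sum>p\<in>P v h. \<alpha> (fst p) * \<beta> (snd p)) = (\<Sum>p\<in>P v h. 1)"
      proof (rule sum.cong)
        fix p assume "p \<in> P v h"
        hence "\<alpha> (fst p) \<noteq> 0" "\<beta> (snd p) \<noteq> 0"
          unfolding P_def A_def B_def supp_def by auto
        thus "\<alpha> (fst p) * \<beta> (snd p) = 1" using tw(2) by simp
      qed simp
      hence "(of_nat (card (P v h)) :: 'f) = 0" using sumP[OF h v] by simp
      hence "even (card (P v h))" using of_nat_two_elem[OF tw(1), of "card (P v h)"]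
        by (auto split: if_splits)
      thus ?thesis using cardP[OF h v] by simp
    qed
    show "even (zd_degree G \<alpha> \<beta> v) \<longleftrightarrow> even n"
      using deg[OF v] sum_odd_parity[OF fA] odd cA by simp
  qed
  show ?thesis using part1 part2 by blast
qed

end
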